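(* Let $p_1>p_2$ be relatively prime positive integers and $c\in[0,1]$. Write the first $p_1+p_2$ terms of $S_c(p_1,p_2)$ as $1^{k_1},2,1^{k_2},2,\dots,1^{k_{p_2}},2,1^{p_1-(k_1+\cdots+k_{p_2})}$. Then $p_1=k_1+\cdots+k_{p_2}$ (that is, the period ends with a $2$) if and only if $c=1$.
   Context: Stationary divisor method with cut point $c\in[0,1]$ for votes $(p_1,p_2)$: seats are allocated one at a time. Initially $a_1=a_2=0$; each next seat goes to a party $i$ maximizing $p_i/(a_i+c)$, whose $a_i$ then increases by $1$. Ties are broken in favor of party $1$. For $c=0$ the convention is that $p_1/0>p_2/0$, and $p_i/0>p_j/k$ for $k>0$. $S_c(p_1,p_2)$ is the infinite sequence of party labels (in $\{1,2\}$) of successive seats. It is periodic with period $p_1+p_2$, with $p_1$ ones and $p_2$ twos per period. The notation $1^k$ denotes $k$ consecutive $1$'s. *)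

theory Defs
  imports Complex_Main
begin

text \<open>Stationary divisor method with cut point c for two parties with votes p1, p2.
  The priority of a party with votes p and a seats is p/(a+c); when a + c = 0 the
  priority is treated as +infinity, and infinite priorities are ordered with party 1 first.\<close>

definition next_is_1 :: "real \<Rightarrow> nat \<Rightarrow> nat \<Rightarrow> nat \<times> nat \<Rightarrow> bool" where
  "next_is_1 c p1 p2 a =
     (if real (fst a) + c = 0 then True
      else if real (snd a) + c = 0 then False
      else real p2 / (real (snd a) + c) \<le> real p1 / (real (fst a) + c))"

primrec alloc :: "real \<Rightarrow> nat \<Rightarrow> nat \<Rightarrow> nat \<Rightarrow> nat \<times> nat" where
  "alloc c p1 p2 0 = (0, 0)"
| "alloc c p1 p2 (Suc n) =
     (let a = alloc c p1 p2 n in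
      if next_is_1 c p1 p2 a then (fst a + 1, snd a) else (fst a, snd a + 1))"

text \<open>The sequence S_c(p1,p2), indexed from 0: S c p1 p2 n is the party label (1 or 2)
  of the (n+1)-th seat.\<close>
definition S :: "real \<Rightarrow> nat \<Rightarrow> nat \<Rightarrow> nat \<Rightarrow> nat" where
  "S c p1 p2 n = (if next_is_1 c p1 p2 (alloc c p1 p2 n) then 1 else 2)"

end

theory Submission
  imports Defs
begin

lemma sum_alloc: "fst (alloc c p1 p2 n) + snd (alloc c p1 p2 n) = n"
  by (induction n) (auto simp: Let_def)

lemma next_iff:
  assumes "0 < p2" "0 < p1" "0 \<le> c"
  shows "next_is_1 c p1 p2 a \<longleftrightarrow>
     real p2 * (real (fst a) + c) \<le> real p1 * (real (snd a) + c)"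
proof (cases "real (fst a) + c = 0")
  case True
  then have "c = 0" "fst a = 0" using assms by auto
  then show ?thesis unfolding next_is_1_def by simp
next
  case F1: False
  show ?thesis
  proof (cases "real (snd a) + c = 0")
    case True
    then have "c = 0" "snd a = 0" using assms by auto
    moreover have "fst a > 0" using F1 \<open>c = 0\<close> by simp
    moreover have "real p2 * real (fst a) > 0" using assms calculation by simp
    ultimately show ?thesis unfolding next_is_1_def by simp
  next
    case False
    have "real (fst a) + c > 0" "real (snd a) + c > 0" using F1 False assms by auto
    then show ?thesis using F1 False unfolding next_is_1_def
      by (simp add: divide_le_eq le_divide_eq field_simps)
  qed
qed

lemma Tle: assumes "p2 < p1" "0 \<le> c" "c \<le> 1"
  shows "c * (real p1 - real p2) \<le> real p1 - real p2"
proof -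
  have "real p1 - real p2 \<ge> 0" using assms by simp
  then show ?thesis using assms mult_left_le_one_le by blast
qed

lemma invar:
  assumes "0 < p2" "p2 < p1" "0 \<le> c" "c \<le> 1"
  defines "T \<equiv> c * (real p1 - real p2)"
  shows "T - real p1 < real p2 * real (fst (alloc c p1 p2 n)) - real p1 * real (snd (alloc c p1 p2 n))
       \<and> real p2 * real (fst (alloc c p1 p2 n)) - real p1 * real (snd (alloc c p1 p2 n)) \<le> T + real p2"
proof (induction n)
  case 0
  have "T \<le> real p1 - real p2" unfolding T_def using assms Tle by blast
  moreover have "0 \<le> T" unfolding T_def using assms by simp
  moreover have "real p2 > 0" using assms by simp
  ultimately show ?case by (simp only: alloc.simps fst_conv snd_conv of_nat_0 mult_zero_right diff_zero) linarith
next
  case (Suc n)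
  let ?a = "alloc c p1 p2 n"
  have ni: "next_is_1 c p1 p2 ?a \<longleftrightarrow>
     real p2 * real (fst ?a) - real p1 * real (snd ?a) \<le> T"
    using next_iff[of p2 p1 c ?a] assms unfolding T_def by (auto simp: algebra_simps)
  have "T \<le> real p1 - real p2" unfolding T_def using assms Tle by blast
  then show ?case using Suc ni assms by (auto simp: Let_def algebra_simps)
qed

lemma mult_ge: "(1::real) \<le> z \<Longrightarrow> 0 \<le> N \<Longrightarrow> N \<le> N * z"
  using mult_left_mono[of 1 z N] by simp

lemma mult_le: "z \<le> (-1::real) \<Longrightarrow> 0 \<le> N \<Longrightarrow> N * z \<le> - N"
  using mult_left_mono[of z "-1" N] by simp

theorem mainTheorem12:
  fixes p1 p2 :: nat and c :: real
  assumes "0 < p2" and "p2 < p1" and "coprime p1 p2"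
    and "0 \<le> c" and "c \<le> 1"
  shows "S c p1 p2 (p1 + p2 - 1) = 2 \<longleftrightarrow> c = 1"
proof -
  define T where "T = c * (real p1 - real p2)"
  define m where "m = p1 + p2 - 1"
  have Nm: "p1 + p2 = Suc m" using assms m_def by simp
  have Tle: "T \<le> real p1 - real p2" unfolding T_def using assms Tle by blast
  have T0: "0 \<le> T" unfolding T_def using assms by simp
  obtain x y where xy: "alloc c p1 p2 (Suc m) = (x, y)" by (metis prod.exhaust)
  have s: "x + y = p1 + p2" using sum_alloc[of c p1 p2 "Suc m"] xy Nm by simp
  have iv: "T - real p1 < real p2 * real x - real p1 * real y"
           "real p2 * real x - real p1 * real y \<le> T + real p2"
    using invar[OF assms(1,2,4,5), of "Suc m"] xy unfolding T_def by auto
  have ry: "real y = real p1 + real p2 - real x" using s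
    by (metis add_diff_cancel_left' of_nat_add)
  define N where "N = real p1 + real p2"
  define z where "z = real x - real p1"
  have g: "real p2 * real x - real p1 * real y = N * z"
    unfolding ry N_def z_def by (simp add: algebra_simps)
  have N0: "0 \<le> N" "real p2 > 0" "N = real p1 + real p2" using assms(1) N_def by auto
  have "x = p1"
  proof (rule ccontr)
    assume "x \<noteq> p1"
    then have "x \<ge> p1 + 1 \<or> x + 1 \<le> p1" by auto
    then show False
    proof
      assume "x \<ge> p1 + 1"
      then have "z \<ge> 1" unfolding z_def by simp
      then have "N \<le> N * z" using mult_ge N0 by blast
      then show False using iv(2) g Tle N0 by linarith
    next
      assume "x + 1 \<le> p1"
      then have "z \<le> -1" unfolding z_def by simp
      then have "N * z \<le> - N" using mult_le N0 by blast
      then show False using iv(1) g T0 N0 by linarith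
    qed
  qed
  then have yp: "y = p2" using s by simp
  obtain u v where uv: "alloc c p1 p2 m = (u, v)" by (metis prod.exhaust)
  have ivm: "T - real p1 < real p2 * real u - real p1 * real v"
           "real p2 * real u - real p1 * real v \<le> T + real p2"
    using invar[OF assms(1,2,4,5), of m] uv unfolding T_def by auto
  have ni: "next_is_1 c p1 p2 (u, v) \<longleftrightarrow>
     real p2 * real u - real p1 * real v \<le> T"
    using next_iff[of p2 p1 c "(u,v)"] assms unfolding T_def by (auto simp: algebra_simps)
  show ?thesis
  proof (cases "next_is_1 c p1 p2 (u, v)")
    case True
    then have "u + 1 = p1" "v = p2" using xy uv \<open>x = p1\<close> yp by (auto simp: Let_def)
    then have hp1: "real p1 = real u + 1" and hv: "real v = real p2"
      by (metis of_nat_1 of_nat_add, simp)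
    have "real p2 * real u - real p1 * real v = - real p2"
      unfolding hp1 hv by (simp add: algebra_simps)
    then have "T < real p1 - real p2" using ivm(1) by linarith
    then have "c \<noteq> 1" unfolding T_def by auto
    then show ?thesis using True uv unfolding S_def m_def by simp
  next
    case False
    then have "u = p1" "v + 1 = p2" using xy uv \<open>x = p1\<close> yp by (auto simp: Let_def)
    then have hu: "real u = real p1" and hp2: "real p2 = real v + 1"
      by (simp, metis of_nat_1 of_nat_add)
    have "real p2 * real u - real p1 * real v = real p1"
      unfolding hu hp2 by (simp add: algebra_simps)
    then have "T \<ge> real p1 - real p2" using ivm(2) by linarith
    then have "c \<ge> 1" unfolding T_def using assms by simp
    then have "c = 1" using assms by simp
    then show ?thesis using False uv unfolding S_def m_def by simp
  qed
qed

end
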